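(* Let $n\ge 1$. If there exist a commutative ring $R$, an injective group homomorphism $\iota:\mu_n\to R^\times$, and an $\mathbb{S}[\mu_{n,+}]$-generator $X\in R$, then $n+1$ is a prime power.
   Context: $\mu_n$ is the group of $n$-th roots of unity. With $\iota(0):=0$, $X\in R$ is an $\mathbb{S}[\mu_{n,+}]$-generator of $R$ if every $z\in R$ can be written uniquely as a finite sum $\sum_j\iota(\alpha_j)X^j$ with $\alpha_j\in\mu_n\cup\{0\}$. *)

theory Defs
  imports Complex_Main "HOL-Computational_Algebra.Primes"
begin

definition mu :: "nat \<Rightarrow> complex set" where
  "mu n = {z. z ^ n = 1}"

definition inj_unit_hom :: "nat \<Rightarrow> (complex \<Rightarrow> 'a::comm_ring_1) \<Rightarrow> bool" where
  "inj_unit_hom n \<iota> \<longleftrightarrow>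
     (\<forall>a\<in>mu n. \<iota> a dvd 1) \<and>
     (\<forall>a\<in>mu n. \<forall>b\<in>mu n. \<iota> (a * b) = \<iota> a * \<iota> b) \<and>
     inj_on \<iota> (mu n)"

definition iota_ext :: "(complex \<Rightarrow> 'a::comm_ring_1) \<Rightarrow> complex \<Rightarrow> 'a" where
  "iota_ext \<iota> a = (if a = 0 then 0 else \<iota> a)"

definition digit_sum :: "(complex \<Rightarrow> 'a::comm_ring_1) \<Rightarrow> 'a \<Rightarrow> (nat \<Rightarrow> complex) \<Rightarrow> 'a" where
  "digit_sum \<iota> X \<alpha> = (\<Sum>j\<in>{j. \<alpha> j \<noteq> 0}. iota_ext \<iota> (\<alpha> j) * X ^ j)"

definition S_mu_generator :: "nat \<Rightarrow> (complex \<Rightarrow> 'a::comm_ring_1) \<Rightarrow> 'a \<Rightarrow> bool" where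
  "S_mu_generator n \<iota> X \<longleftrightarrow>
     (\<forall>z::'a. \<exists>!\<alpha>::nat \<Rightarrow> complex.
        (\<forall>j. \<alpha> j \<in> mu n \<union> {0}) \<and> finite {j. \<alpha> j \<noteq> 0} \<and> z = digit_sum \<iota> X \<alpha>)"

end

theory Submission
  imports Defs "HOL-Algebra.Sylow" "HOL-Algebra.Multiplicative_Group"
begin

locale gensetup =
  fixes n :: nat and \<iota> :: "complex \<Rightarrow> 'a::comm_ring_1" and X :: 'a
  assumes n1: "n \<ge> 1"
    and hom: "inj_unit_hom n \<iota>"
    and gen: "S_mu_generator n \<iota> X"
begin

abbreviation A where "A \<equiv> mu n \<union> {0}"
abbreviation e where "e \<equiv> iota_ext \<iota>"

definition valid :: "(nat \<Rightarrow> complex) \<Rightarrow> bool" where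
  "valid \<alpha> \<longleftrightarrow> (\<forall>j. \<alpha> j \<in> A) \<and> finite {j. \<alpha> j \<noteq> 0}"

lemma e0 [simp]: "e 0 = 0" by (simp add: iota_ext_def)

lemma digit_sum_lessThan:
  assumes "finite {j. \<alpha> j \<noteq> 0}" "{j. \<alpha> j \<noteq> 0} \<subseteq> {..<N}"
  shows "digit_sum \<iota> X \<alpha> = (\<Sum>j<N. e (\<alpha> j) * X ^ j)"
  unfolding digit_sum_def
  by (rule sum.mono_neutral_left) (use assms in auto)

lemma shift:
  assumes "valid \<beta>" "a \<in> A"
  shows "valid (\<lambda>j. if j = 0 then a else \<beta> (j - 1))"
    and "digit_sum \<iota> X (\<lambda>j. if j = 0 then a else \<beta> (j - 1)) = e a + X * digit_sum \<iota> X \<beta>"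
proof -
  let ?\<alpha> = "\<lambda>j. if j = 0 then a else \<beta> (j - 1)"
  have fin: "finite {j. \<beta> j \<noteq> 0}" using assms(1) valid_def by auto
  then obtain N where N: "{j. \<beta> j \<noteq> 0} \<subseteq> {..<N}"
    by (meson finite_nat_iff_bounded)
  have sub: "{j. ?\<alpha> j \<noteq> 0} \<subseteq> {..<Suc N}" using N by auto
  have fin2: "finite {j. ?\<alpha> j \<noteq> 0}" using finite_subset[OF sub] by simp
  show "valid ?\<alpha>" using assms fin2 unfolding valid_def by auto
  have "digit_sum \<iota> X ?\<alpha> = (\<Sum>j<Suc N. e (?\<alpha> j) * X ^ j)"
    by (rule digit_sum_lessThan[OF fin2 sub])
  also have "\<dots> = e a + (\<Sum>j<N. e (\<beta> j) * X ^ Suc j)"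
    by (subst sum.lessThan_Suc_shift) simp
  also have "\<dots> = e a + X * (\<Sum>j<N. e (\<beta> j) * X ^ j)"
    by (simp add: sum_distrib_left mult_ac)
  also have "\<dots> = e a + X * digit_sum \<iota> X \<beta>"
    using digit_sum_lessThan[OF fin N] by simp
  finally show "digit_sum \<iota> X ?\<alpha> = e a + X * digit_sum \<iota> X \<beta>" .
qed

lemma valid_zero: "valid (\<lambda>_. 0)" by (simp add: valid_def)
lemma digit_zero: "digit_sum \<iota> X (\<lambda>_. 0) = 0" by (simp add: digit_sum_def)

lemma gen_ex: "\<exists>\<alpha>. valid \<alpha> \<and> z = digit_sum \<iota> X \<alpha>"
  using gen unfolding S_mu_generator_def valid_def by metis

lemma gen_uniq: "valid \<alpha> \<Longrightarrow> valid \<beta> \<Longrightarrow> digit_sum \<iota> X \<alpha> = digit_sum \<iota> X \<beta> \<Longrightarrow> \<alpha> = \<beta>"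
  using gen unfolding S_mu_generator_def valid_def by metis

lemma exists_rep: "\<exists>c\<in>A. X dvd z - e c"
proof -
  obtain \<alpha> where v: "valid \<alpha>" and z: "z = digit_sum \<iota> X \<alpha>" using gen_ex by blast
  have v2: "valid (\<lambda>j. \<alpha> (Suc j))"
  proof -
    have "{j. \<alpha> (Suc j) \<noteq> 0} = Suc -` {j. \<alpha> j \<noteq> 0}" by auto
    moreover have "finite (Suc -` {j. \<alpha> j \<noteq> 0})"
      using v unfolding valid_def by (intro finite_vimageI) auto
    ultimately show ?thesis using v unfolding valid_def by auto
  qed
  have a0: "\<alpha> 0 \<in> A" using v valid_def by auto
  have "\<alpha> = (\<lambda>j. if j = 0 then \<alpha> 0 else \<alpha> (Suc (j - 1)))" by (auto simp: fun_eq_iff)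
  then have "z = e (\<alpha> 0) + X * digit_sum \<iota> X (\<lambda>j. \<alpha> (Suc j))"
    using shift(2)[OF v2 a0] z by simp
  then show ?thesis using a0 by (intro bexI[of _ "\<alpha> 0"]) auto
qed

lemma cong_unique:
  assumes "a \<in> A" "b \<in> A" "X dvd e a - e b" shows "a = b"
proof -
  obtain w where w: "e a - e b = X * w" using assms(3) by (auto elim: dvdE)
  obtain \<gamma> where v: "valid \<gamma>" and wg: "w = digit_sum \<iota> X \<gamma>" using gen_ex by blast
  let ?a1 = "\<lambda>j. if j = 0 then a else (\<lambda>_. 0) (j - 1)"
  let ?a2 = "\<lambda>j. if j = 0 then b else \<gamma> (j - 1)"
  have "digit_sum \<iota> X ?a1 = e a" using shift(2)[OF valid_zero assms(1)] digit_zero by simp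
  moreover have "digit_sum \<iota> X ?a2 = e b + X * w" using shift(2)[OF v assms(2)] wg by simp
  ultimately have "digit_sum \<iota> X ?a1 = digit_sum \<iota> X ?a2" using w by (simp add: algebra_simps)
  then have "?a1 = ?a2" using gen_uniq shift(1) valid_zero v assms(1,2) by blast
  then show ?thesis using fun_cong[of ?a1 ?a2 0] by simp
qed

definition rep :: "'a \<Rightarrow> complex" where
  "rep z = (SOME c. c \<in> A \<and> X dvd z - e c)"

lemma rep: "rep z \<in> A" "X dvd z - e (rep z)"
  using someI_ex[of "\<lambda>c. c \<in> A \<and> X dvd z - e c"] exists_rep unfolding rep_def by blast+

lemma rep_eq: assumes "c \<in> A" "X dvd z - e c" shows "rep z = c"
proof (rule cong_unique[OF rep(1) assms(1)])
  have "e (rep z) - e c = (z - e c) - (z - e (rep z))" by simp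
  then show "X dvd e (rep z) - e c" using rep(2) assms(2) by (metis dvd_diff)
qed

lemma rep_cong: assumes "X dvd z - w" shows "rep z = rep w"
proof (rule rep_eq[OF rep(1)])
  have "z - e (rep w) = (z - w) + (w - e (rep w))" by simp
  then show "X dvd z - e (rep w)" using rep(2) assms by (metis dvd_add)
qed

definition G :: "complex monoid" where
  "G = \<lparr>carrier = A, mult = (\<lambda>a b. rep (e a + e b)), one = 0\<rparr>"

lemma rep_e: "a \<in> A \<Longrightarrow> rep (e a) = a"
  by (rule rep_eq) auto

lemma G_group: "group G"
proof (rule groupI)
  fix x y z assume x: "x \<in> carrier G" and y: "y \<in> carrier G" and z: "z \<in> carrier G"
  show "x \<otimes>\<^bsub>G\<^esub> y \<in> carrier G" using rep(1)[of "e x + e y"] by (simp add: G_def)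
  show "x \<otimes>\<^bsub>G\<^esub> y \<otimes>\<^bsub>G\<^esub> z = x \<otimes>\<^bsub>G\<^esub> (y \<otimes>\<^bsub>G\<^esub> z)"
  proof -
    have "e (rep (e x + e y)) + e z - (e x + e (rep (e y + e z)))
          = ((e y + e z) - e (rep (e y + e z))) - ((e x + e y) - e (rep (e x + e y)))"
      by (simp add: algebra_simps)
    then have "X dvd e (rep (e x + e y)) + e z - (e x + e (rep (e y + e z)))"
      using rep(2) by (metis dvd_diff)
    then have "rep (e (rep (e x + e y)) + e z) = rep (e x + e (rep (e y + e z)))" by (rule rep_cong)
    then show ?thesis by (simp add: G_def)
  qed
  show "\<one>\<^bsub>G\<^esub> \<otimes>\<^bsub>G\<^esub> x = x" using x by (simp add: G_def rep_e)
  show "\<exists>y\<in>carrier G. y \<otimes>\<^bsub>G\<^esub> x = \<one>\<^bsub>G\<^esub>"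
  proof (intro bexI)
    have "e (rep (- e x)) + e x - e 0 = - (- e x - e (rep (- e x)))" by simp
    moreover have "X dvd - (- e x - e (rep (- e x)))" using rep(2)[of "- e x"] by (simp only: dvd_minus_iff)
    ultimately have "X dvd e (rep (- e x)) + e x - e 0" by simp
    then have "rep (e (rep (- e x)) + e x) = 0" by (intro rep_eq) auto
    then show "rep (- e x) \<otimes>\<^bsub>G\<^esub> x = \<one>\<^bsub>G\<^esub>" by (simp add: G_def)
    show "rep (- e x) \<in> carrier G" using rep(1)[of "- e x"] by (simp add: G_def)
  qed
qed (simp add: G_def)

lemma G_pow: "x \<in> A \<Longrightarrow> x [^]\<^bsub>G\<^esub> k = rep (of_nat k * e x)"
proof (induction k)
  case 0 then show ?case by (simp add: G_def rep_e[of 0, simplified])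
next
  case (Suc k)
  have "x [^]\<^bsub>G\<^esub> Suc k = rep (e (rep (of_nat k * e x)) + e x)"
    using Suc by (simp add: G_def)
  also have "\<dots> = rep (of_nat (Suc k) * e x)"
  proof (rule rep_cong)
    have "e (rep (of_nat k * e x)) + e x - of_nat (Suc k) * e x = - (of_nat k * e x - e (rep (of_nat k * e x)))"
      by (simp add: algebra_simps)
    then show "X dvd e (rep (of_nat k * e x)) + e x - of_nat (Suc k) * e x"
      using rep(2)[of "of_nat k * e x"] by (simp only: dvd_minus_iff)
  qed
  finally show ?case .
qed

lemma zero_notin: "(0::complex) \<notin> mu n"
  using n1 by (simp add: mu_def power_0_left)

lemma unit_e: "x \<in> mu n \<Longrightarrow> e x dvd 1"
proof -
  assume x: "x \<in> mu n"
  have "x \<noteq> 0" using x zero_notin by auto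
  then show ?thesis using hom x by (simp add: inj_unit_hom_def iota_ext_def)
qed

lemma X_not_dvd_1: "\<not> X dvd 1"
proof
  assume "X dvd 1"
  then have "X dvd e 1 - e 0" using one_dvd by (rule dvd_trans)
  moreover have "(1::complex) \<in> A" by (simp add: mu_def)
  ultimately have "(1::complex) = 0" by (intro cong_unique) auto
  then show False by simp
qed

lemma card_A: "card A = n + 1"
proof -
  have "card (mu n) = n"
    using bij_betw_same_card[OF bij_betw_roots_unity[of n]] n1 by (simp add: mu_def)
  moreover have "finite (mu n)"
  proof (rule ccontr)
    assume "infinite (mu n)"
    then have "card (mu n) = 0" by simp
    then show False using \<open>card (mu n) = n\<close> n1 by simp
  qed
  moreover note zero_notin
  ultimately show ?thesis by simp
qed

lemma prime_div:
  assumes r: "prime r" "r dvd n + 1" shows "X dvd of_nat r"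
proof -
  have fin: "finite (carrier G)"
  proof (rule ccontr)
    assume "infinite (carrier G)"
    then have "card A = 0" by (simp add: G_def)
    then show False using card_A by simp
  qed
  have ord: "order G = r ^ 1 * ((n + 1) div r)" using card_A r by (simp add: order_def G_def)
  obtain H where H: "subgroup H G" "card H = r" using sylow_thm[OF r(1) G_group ord fin] by auto
  have "card H \<ge> 2" using H r prime_ge_2_nat by auto
  have "\<not> H \<subseteq> {0}"
  proof
    assume "H \<subseteq> {0}"
    then have "card H \<le> card {0::complex}" by (rule card_mono[rotated]) simp
    then show False using \<open>card H \<ge> 2\<close> by simp
  qed
  then obtain x where xH: "x \<in> H" "x \<noteq> 0" by blast
  have xA: "x \<in> A" using H(1) xH subgroup.subset G_def by fastforce
  interpret GG: group G by (rule G_group)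
  have grp: "group (G\<lparr>carrier := H\<rparr>)" by (rule GG.subgroup_imp_group[OF H(1)])
  have o: "order (G\<lparr>carrier := H\<rparr>) = r" using H(2) by (simp add: order_def)
  have xc: "x \<in> carrier (G\<lparr>carrier := H\<rparr>)" using xH by simp
  have "x [^]\<^bsub>G\<lparr>carrier := H\<rparr>\<^esub> r = \<one>\<^bsub>G\<lparr>carrier := H\<rparr>\<^esub>"
    using group.pow_order_eq_1[OF grp xc] unfolding o .
  then have "x [^]\<^bsub>G\<^esub> r = \<one>\<^bsub>G\<^esub>" using GG.nat_pow_consistent[of x r H] by simp
  moreover have "\<one>\<^bsub>G\<^esub> = (0::complex)" by (simp add: G_def)
  ultimately have "x [^]\<^bsub>G\<^esub> r = 0" by simp
  then have "rep (of_nat r * e x) = 0" using G_pow[OF xA] by simp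
  then have "X dvd of_nat r * e x" using rep(2)[of "of_nat r * e x"] by simp
  moreover have "x \<in> mu n" using xA xH(2) by simp
  then have "e x dvd 1" by (rule unit_e)
  then obtain u where "1 = e x * u" by (rule dvdE)
  ultimately have "X dvd of_nat r * e x * u" by simp
  then show ?thesis using \<open>1 = e x * u\<close> by (simp add: mult.assoc)
qed

lemma main: "\<exists>p k. prime p \<and> k \<ge> 1 \<and> n + 1 = p ^ k"
proof -
  have q2: "n + 1 \<ge> 2" using n1 by simp
  obtain p where p: "prime p" "p dvd n + 1" using q2 prime_factor_nat[of "n+1"] by auto
  have all: "r = p" if "prime r" "r dvd n + 1" for r
  proof (rule ccontr)
    assume "r \<noteq> p"
    then have "coprime r p" using that p by (simp add: primes_coprime)
    then have "coprime (int r) (int p)" by simp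
    then have "gcd (int r) (int p) = 1" by (rule coprime_imp_gcd_eq_1)
    then obtain u v :: int where "u * int r + v * int p = 1"
      using bezout_int[of "int r" "int p"] by auto
    then have "(of_int (u * int r + v * int p) :: 'a) = of_int 1" by simp
    then have "(1::'a) = of_int u * of_nat r + of_int v * of_nat p" by simp
    moreover have "X dvd of_int u * of_nat r + of_int v * of_nat p"
      using prime_div[OF that] prime_div[OF p] by (intro dvd_add dvd_mult)
    ultimately have "X dvd 1" by simp
    then show False using X_not_dvd_1 by blast
  qed
  have "prime_factors (n + 1) = {p}"
  proof (intro equalityI subsetI)
    fix q assume "q \<in> prime_factors (n + 1)"
    then have "prime q" "q dvd n + 1" by (auto simp: in_prime_factors_iff)
    then show "q \<in> {p}" using all by blast
  next
    fix q assume "q \<in> {p}"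
    then show "q \<in> prime_factors (n + 1)" using p by (simp add: in_prime_factors_iff)
  qed
  then have "n + 1 = p ^ multiplicity p (n + 1)"
    using prod_prime_factors[of "n+1"] by simp
  moreover have "multiplicity p (n + 1) \<ge> 1"
    using p by (simp add: prime_multiplicity_gt_zero_iff Suc_le_eq)
  ultimately show ?thesis using p by blast
qed

end

theorem corollary5p8:
  fixes n :: nat and \<iota> :: "complex \<Rightarrow> 'a::comm_ring_1" and X :: 'a
  assumes "n \<ge> 1"
    and "inj_unit_hom n \<iota>"
    and "S_mu_generator n \<iota> X"
  shows "\<exists>p k. prime p \<and> k \<ge> 1 \<and> n + 1 = p ^ k"
proof -
  interpret gensetup n \<iota> X using assms by unfold_locales
  show ?thesis by (rule main)
qed

end
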